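(* Let $(\mathfrak m,I)$ be a non--degenerate pseudo--complex fundamental graded Lie algebra of $l$-th type with Tanaka prolongation $\mathfrak g=\bigoplus_{i\ge-l}\mathfrak g_i$, and let $\phi(\mathfrak m)\subset\mathfrak n\cong\mathbb{C}^N$ be the corresponding standard real submanifold. For every $X\in\mathfrak g_j$, the infinitesimal CR automorphism of $\phi(\mathfrak m)$ corresponding to $X$ is a weighted homogeneous holomorphic vector field on $\mathbb{C}^N=\mathfrak n$ of weighted degree $j$.
   Context: $(\mathfrak m,I)$: $\mathfrak m=\mathfrak g_{-l}\oplus\dots\oplus\mathfrak g_{-1}$ a real graded Lie algebra generated by $\mathfrak g_{-1}$, $\mathfrak g_{-l}\ne0$, bracket $\mathfrak g_{-1}\times\mathfrak g_{-1}\to\mathfrak g_{-2}$ nondegenerate, $I$ a complex structure on $\mathfrak g_{-1}$ with $[IX,IY]=[X,Y]$. Tanaka prolongation: $\mathfrak g_0$ = grading-preserving derivations of $\mathfrak m$ commuting with $I$ on $\mathfrak g_{-1}$; for $i>0$, $\mathfrak g_i=\{f\in\bigoplus_{j<0}\mathfrak g_j^*\otimes\mathfrak g_{j+i}:f([X,Y])=[f(X),Y]+[X,f(Y)]\ \forall X,Y\in\mathfrak m\}$; this is a finite-dimensional graded Lie algebra containing $\mathfrak m$ as its negative part. With $\mathfrak g_{-1}^{10}=\{X-iIX\}$, $\mathfrak g_{-1}^{01}=\{X+iIX\}$, $\mathfrak n=(\mathfrak g_{-l}\oplus\dots\oplus\mathfrak g_{-2})\otimes\mathbb{C}\oplus\mathfrak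 g_{-1}^{10}$, the standard real submanifold is $\phi(\mathfrak m)$, $\phi(X)=\exp^{-1}(\exp(X)\exp(-\tfrac12(X_{-1}+iIX_{-1})))$, i.e. the inclusion $\exp(\mathfrak m)\subset\exp(\mathfrak n)$ of nilpotent groups in exponential coordinates. The infinitesimal CR automorphism corresponding to $X\in\mathfrak g$ is the holomorphic vector field on $\exp(\mathfrak n)$ whose value at $\exp(Y)$, $Y\in\mathfrak n$, in the left-invariant trivialization $T\exp(\mathfrak n)\cong\mathfrak n$, is $(\mathrm{Ad}(\exp(-Y))X)_{\mathfrak n}$, the component in $\mathfrak m\otimes\mathbb{C}$ projected to $\mathfrak n$ along $\mathfrak g_{-1}^{01}$ (written in exponential coordinates). Weights: coordinates on $\mathfrak g_{-j}\otimes\mathbb{C}$ (resp. $\mathfrak g_{-1}^{10}$) have weight $j$, the corresponding coordinate vector fields weight $-j$; a field $\sum f_u\,\partial_u$ is weighted homogeneous of degree $d$ if each $f_u$ is weighted homogeneous of degree $d+[u]$. *)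

theory Defs
  imports "HOL-Analysis.Analysis"
begin

definition lie_bracket :: "('g::real_vector \<Rightarrow> 'g \<Rightarrow> 'g) \<Rightarrow> bool" where
  "lie_bracket B \<longleftrightarrow>
     (\<forall>x. linear (B x)) \<and> (\<forall>y. linear (\<lambda>x. B x y)) \<and> (\<forall>x. B x x = 0) \<and>
     (\<forall>x y z. B x (B y z) + B y (B z x) + B z (B x y) = 0)"

definition graded :: "(int \<Rightarrow> 'g::real_vector set) \<Rightarrow> bool" where
  "graded G \<longleftrightarrow> (\<forall>i. subspace (G i)) \<and>
     (\<forall>x. \<exists>!c. finite {i. c i \<noteq> 0} \<and> (\<forall>i. c i \<in> G i) \<and> x = (\<Sum>i\<in>{i. c i \<noteq> 0}. c i))"

definition gcomp :: "(int \<Rightarrow> 'g::real_vector set) \<Rightarrow> 'g \<Rightarrow> int \<Rightarrow> 'g" where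
  "gcomp G x = (THE c. finite {i. c i \<noteq> 0} \<and> (\<forall>i. c i \<in> G i) \<and> x = (\<Sum>i\<in>{i. c i \<noteq> 0}. c i))"

definition graded_lie_algebra :: "(int \<Rightarrow> 'g::real_vector set) \<Rightarrow> ('g \<Rightarrow> 'g \<Rightarrow> 'g) \<Rightarrow> bool" where
  "graded_lie_algebra G B \<longleftrightarrow> graded G \<and> lie_bracket B \<and>
     (\<forall>i j x y. x \<in> G i \<longrightarrow> y \<in> G j \<longrightarrow> B x y \<in> G (i + j))"

definition negpart :: "(int \<Rightarrow> 'g::real_vector set) \<Rightarrow> 'g set" where
  "negpart G = {x. \<forall>i\<ge>0. gcomp G x i = 0}"

definition pc_fundamental ::
  "(int \<Rightarrow> 'g::real_vector set) \<Rightarrow> ('g \<Rightarrow> 'g \<Rightarrow> 'g) \<Rightarrow> ('g \<Rightarrow> 'g) \<Rightarrow> int \<Rightarrow> bool" where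
  "pc_fundamental G B I l \<longleftrightarrow>
     l \<ge> 1 \<and> G (-l) \<noteq> {0} \<and> (\<forall>i < -l. G i = {0}) \<and>
     \<comment> \<open>generated by g_{-1}\<close>
     (\<forall>i. -l < i \<and> i \<le> -1 \<longrightarrow> G (i - 1) = span {B x y | x y. x \<in> G (-1) \<and> y \<in> G i}) \<and>
     \<comment> \<open>non-degeneracy of g_{-1} x g_{-1} -> g_{-2}\<close>
     (\<forall>x\<in>G (-1). (\<forall>y\<in>G (-1). B x y = 0) \<longrightarrow> x = 0) \<and>
     \<comment> \<open>I is a complex structure on g_{-1} with [IX,IY] = [X,Y]\<close>
     (\<forall>x\<in>G (-1). I x \<in> G (-1) \<and> I (I x) = - x) \<and>
     (\<forall>x\<in>G (-1). \<forall>y\<in>G (-1). \<forall>a b::real. I (a *\<^sub>R x + b *\<^sub>R y) = a *\<^sub>R I x + b *\<^sub>R I y) \<and>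
     (\<forall>x\<in>G (-1). \<forall>y\<in>G (-1). B (I x) (I y) = B x y)"

text \<open>The nonnegative part of G is (isomorphic to) the Tanaka prolongation of (m, I):
  transitivity (g_i, i>=0, acts faithfully on m via ad) and maximality (every element of
  the prolongation space g_i of the context, i.e. every degree-i derivation of m, commuting
  with I on g_{-1} when i = 0, is ad X restricted to m for some X in G i).\<close>
definition tanaka_prolongation ::
  "(int \<Rightarrow> 'g::real_vector set) \<Rightarrow> ('g \<Rightarrow> 'g \<Rightarrow> 'g) \<Rightarrow> ('g \<Rightarrow> 'g) \<Rightarrow> bool" where
  "tanaka_prolongation G B I \<longleftrightarrow>
     (\<forall>i\<ge>0. \<forall>X\<in>G i. (\<forall>Y\<in>negpart G. B X Y = 0) \<longrightarrow> X = 0) \<and>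
     (\<forall>X\<in>G 0. \<forall>Y\<in>G (-1). B X (I Y) = I (B X Y)) \<and>
     (\<forall>i\<ge>0. \<forall>f. linear f \<and> (\<forall>j<0. \<forall>x\<in>G j. f x \<in> G (j + i)) \<and>
        (\<forall>x\<in>negpart G. \<forall>y\<in>negpart G. f (B x y) = B (f x) y + B x (f y)) \<and>
        (i = 0 \<longrightarrow> (\<forall>x\<in>G (-1). f (I x) = I (f x)))
        \<longrightarrow> (\<exists>X\<in>G i. \<forall>Y\<in>negpart G. B X Y = f Y))"

section \<open>Complexification g \<otimes> C, represented as pairs (a, b) = a + i b\<close>

definition cbr :: "('g::real_vector \<Rightarrow> 'g \<Rightarrow> 'g) \<Rightarrow> 'g \<times> 'g \<Rightarrow> 'g \<times> 'g \<Rightarrow> 'g \<times> 'g" where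
  "cbr B z w = (B (fst z) (fst w) - B (snd z) (snd w), B (fst z) (snd w) + B (snd z) (fst w))"

definition cscale :: "complex \<Rightarrow> 'g::real_vector \<times> 'g \<Rightarrow> 'g \<times> 'g" where
  "cscale t z = (Re t *\<^sub>R fst z - Im t *\<^sub>R snd z, Re t *\<^sub>R snd z + Im t *\<^sub>R fst z)"

definition gcompC :: "(int \<Rightarrow> 'g::real_vector set) \<Rightarrow> 'g \<times> 'g \<Rightarrow> int \<Rightarrow> 'g \<times> 'g" where
  "gcompC G z i = (gcomp G (fst z) i, gcomp G (snd z) i)"

text \<open>g_{-1}^{10} = {X - i I X}, g_{-1}^{01} = {X + i I X}.\<close>
definition g10 :: "(int \<Rightarrow> 'g::real_vector set) \<Rightarrow> ('g \<Rightarrow> 'g) \<Rightarrow> ('g \<times> 'g) set" where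
  "g10 G I = {(x, - I x) | x. x \<in> G (-1)}"

definition g01 :: "(int \<Rightarrow> 'g::real_vector set) \<Rightarrow> ('g \<Rightarrow> 'g) \<Rightarrow> ('g \<times> 'g) set" where
  "g01 G I = {(x, I x) | x. x \<in> G (-1)}"

text \<open>n = (g_{-l} + ... + g_{-2}) \<otimes> C + g_{-1}^{10}.\<close>
definition nset :: "(int \<Rightarrow> 'g::real_vector set) \<Rightarrow> ('g \<Rightarrow> 'g) \<Rightarrow> ('g \<times> 'g) set" where
  "nset G I = {z. (\<forall>i\<ge>0. gcompC G z i = 0) \<and> gcompC G z (-1) \<in> g10 G I}"

definition mCpart :: "(int \<Rightarrow> 'g::real_vector set) \<Rightarrow> 'g \<times> 'g \<Rightarrow> 'g \<times> 'g" where
  "mCpart G z = (\<Sum>i\<in>{i. i < 0 \<and> gcompC G z i \<noteq> 0}. gcompC G z i)"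

definition projn :: "(int \<Rightarrow> 'g::real_vector set) \<Rightarrow> ('g \<Rightarrow> 'g) \<Rightarrow> 'g \<times> 'g \<Rightarrow> 'g \<times> 'g" where
  "projn G I z = (THE u. u \<in> nset G I \<and> mCpart G z - u \<in> g01 G I)"

definition adpow :: "('g::real_vector \<Rightarrow> 'g \<Rightarrow> 'g) \<Rightarrow> 'g \<times> 'g \<Rightarrow> nat \<Rightarrow> 'g \<times> 'g \<Rightarrow> 'g \<times> 'g" where
  "adpow B Y k w = ((cbr B Y) ^^ k) w"

definition nord :: "('g::real_vector \<Rightarrow> 'g \<Rightarrow> 'g) \<Rightarrow> 'g \<times> 'g \<Rightarrow> 'g \<times> 'g \<Rightarrow> nat" where
  "nord B Y w = (LEAST k. adpow B Y k w = 0)"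

text \<open>Ad(exp Y) w = exp(ad Y) w (ad Y nilpotent).\<close>
definition AdExp :: "('g::real_vector \<Rightarrow> 'g \<Rightarrow> 'g) \<Rightarrow> 'g \<times> 'g \<Rightarrow> 'g \<times> 'g \<Rightarrow> 'g \<times> 'g" where
  "AdExp B Y w = (\<Sum>k<nord B Y w. (1 / fact k) *\<^sub>R adpow B Y k w)"

text \<open>Left-trivialized differential of exp at Y: ((1 - exp(-ad Y)) / ad Y) w.\<close>
definition dexpL :: "('g::real_vector \<Rightarrow> 'g \<Rightarrow> 'g) \<Rightarrow> 'g \<times> 'g \<Rightarrow> 'g \<times> 'g \<Rightarrow> 'g \<times> 'g" where
  "dexpL B Y w = (\<Sum>k<nord B Y w. ((-1) ^ k / fact (Suc k)) *\<^sub>R adpow B Y k w)"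

text \<open>Conversion of a left-trivialized tangent vector v at exp(Y) into exponential coordinates.\<close>
definition expcoord ::
  "(int \<Rightarrow> 'g::real_vector set) \<Rightarrow> ('g \<Rightarrow> 'g) \<Rightarrow> ('g \<Rightarrow> 'g \<Rightarrow> 'g) \<Rightarrow> 'g \<times> 'g \<Rightarrow> 'g \<times> 'g \<Rightarrow> 'g \<times> 'g" where
  "expcoord G I B Y v = (THE w. w \<in> nset G I \<and> dexpL B Y w = v)"

text \<open>The infinitesimal CR automorphism corresponding to X, as a map n -> n in exponential
  coordinates: Y \<mapsto> (Ad(exp(-Y)) X)_n, written in exponential coordinates.\<close>
definition inf_cr_aut ::
  "(int \<Rightarrow> 'g::real_vector set) \<Rightarrow> ('g \<Rightarrow> 'g) \<Rightarrow> ('g \<Rightarrow> 'g \<Rightarrow> 'g) \<Rightarrow> 'g \<Rightarrow> 'g \<times> 'g \<Rightarrow> 'g \<times> 'g" where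
  "inf_cr_aut G I B X Y = expcoord G I B Y (projn G I (AdExp B (- Y) (X, 0)))"

definition dil :: "(int \<Rightarrow> 'g::real_vector set) \<Rightarrow> int \<Rightarrow> complex \<Rightarrow> 'g \<times> 'g \<Rightarrow> 'g \<times> 'g" where
  "dil G l t z = (\<Sum>k\<in>{1..l}. cscale (t ^ nat k) (gcompC G z (-k)))"

text \<open>A vector field F = \<Sum> f_u \<partial>_u on n is weighted homogeneous of degree d iff each
  coefficient of a weight-k coordinate vector field is weighted homogeneous of degree d + k;
  stated via the weight-k component of F (coordinates of weight k are the linear
  functionals on the weight-k summand).\<close>
definition weighted_homog_field ::
  "(int \<Rightarrow> 'g::real_vector set) \<Rightarrow> ('g \<Rightarrow> 'g) \<Rightarrow> int \<Rightarrow> ('g \<times> 'g \<Rightarrow> 'g \<times> 'g) \<Rightarrow> int \<Rightarrow> bool" where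
  "weighted_homog_field G I l F d \<longleftrightarrow>
     (\<forall>z\<in>nset G I. \<forall>t::complex. t \<noteq> 0 \<longrightarrow> (\<forall>k\<in>{1..l}.
        gcompC G (F (dil G l t z)) (-k) = cscale (t powi (d + k)) (gcompC G (F z) (-k))))"

end

theory Submission imports Defs begin

locale gla =
  fixes G :: "int \<Rightarrow> 'g::real_vector set" and B :: "'g \<Rightarrow> 'g \<Rightarrow> 'g"
  assumes graded: "graded G" and lb: "lie_bracket B"
    and degB: "\<And>i j x y. x \<in> G i \<Longrightarrow> y \<in> G j \<Longrightarrow> B x y \<in> G (i + j)"
begin

lemma sub: "subspace (G i)" using graded unfolding graded_def by auto

lemma gc_props: "finite {i. gcomp G x i \<noteq> 0} \<and> (\<forall>i. gcomp G x i \<in> G i) \<and>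
   x = (\<Sum>i\<in>{i. gcomp G x i \<noteq> 0}. gcomp G x i)"
proof -
  have "\<exists>!c. finite {i. c i \<noteq> 0} \<and> (\<forall>i. c i \<in> G i) \<and> x = (\<Sum>i\<in>{i. c i \<noteq> 0}. c i)"
    using graded unfolding graded_def by blast
  from theI'[OF this] show ?thesis unfolding gcomp_def .
qed

lemma gc_in: "gcomp G x i \<in> G i" using gc_props by blast
lemma gc_fin: "finite {i. gcomp G x i \<noteq> 0}" using gc_props by blast

lemma gc_sum: assumes "finite S" "{i. gcomp G x i \<noteq> 0} \<subseteq> S"
  shows "x = (\<Sum>i\<in>S. gcomp G x i)"
proof -
  have "x = (\<Sum>i\<in>{i. gcomp G x i \<noteq> 0}. gcomp G x i)" using gc_props by blast
  also have "\<dots> = (\<Sum>i\<in>S. gcomp G x i)"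
    by (rule sum.mono_neutral_left) (use assms in auto)
  finally show ?thesis .
qed

lemma gc_unique: assumes "finite S" "\<And>i. c i \<in> G i" "\<And>i. i \<notin> S \<Longrightarrow> c i = 0" "x = sum c S"
  shows "gcomp G x = c"
proof -
  have ex: "\<exists>!c. finite {i. c i \<noteq> 0} \<and> (\<forall>i. c i \<in> G i) \<and> x = (\<Sum>i\<in>{i. c i \<noteq> 0}. c i)"
    using graded unfolding graded_def by blast
  have sub: "{i. c i \<noteq> 0} \<subseteq> S" using assms(3) by auto
  have "sum c S = (\<Sum>i\<in>{i. c i \<noteq> 0}. c i)"
    by (rule sum.mono_neutral_right) (use assms sub in auto)
  then have P: "finite {i. c i \<noteq> 0} \<and> (\<forall>i. c i \<in> G i) \<and> x = (\<Sum>i\<in>{i. c i \<noteq> 0}. c i)"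
    using assms sub finite_subset by auto
  show ?thesis unfolding gcomp_def
    using the1_equality[OF ex] P by blast
qed

lemma gc_hom: assumes "x \<in> G m" shows "gcomp G x i = (if i = m then x else 0)"
proof -
  have "gcomp G x = (\<lambda>i. if i = m then x else 0)"
    by (rule gc_unique[of "{m}"]) (use assms subspace_0[OF sub] in auto)
  then show ?thesis by simp
qed

lemma gc_add: "gcomp G (x + y) i = gcomp G x i + gcomp G y i"
proof -
  let ?S = "{i. gcomp G x i \<noteq> 0} \<union> {i. gcomp G y i \<noteq> 0}"
  have f: "finite ?S" using gc_fin by auto
  have "gcomp G (x + y) = (\<lambda>i. gcomp G x i + gcomp G y i)"
  proof (rule gc_unique[OF f])
    show "gcomp G x i + gcomp G y i \<in> G i" for i using subspace_add[OF sub] gc_in by blast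
    show "x + y = (\<Sum>i\<in>?S. gcomp G x i + gcomp G y i)"
      using gc_sum[OF f, of x] gc_sum[OF f, of y] by (auto simp: sum.distrib)
  qed auto
  then show ?thesis by simp
qed

lemma gc_scale: "gcomp G (a *\<^sub>R x) i = a *\<^sub>R gcomp G x i"
proof -
  let ?S = "{i. gcomp G x i \<noteq> 0}"
  have f: "finite ?S" using gc_fin by auto
  have "gcomp G (a *\<^sub>R x) = (\<lambda>i. a *\<^sub>R gcomp G x i)"
  proof (rule gc_unique[OF f])
    show "a *\<^sub>R gcomp G x i \<in> G i" for i using subspace_mul[OF sub] gc_in by blast
    show "a *\<^sub>R x = (\<Sum>i\<in>?S. a *\<^sub>R gcomp G x i)"
      using gc_sum[OF f, of x] by (simp add: scaleR_sum_right[symmetric])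
  qed auto
  then show ?thesis by simp
qed

lemma gc_zero[simp]: "gcomp G 0 i = 0" using gc_scale[of 0 0] by simp
lemma gc_neg: "gcomp G (- x) i = - gcomp G x i" using gc_scale[of "-1" x] by simp
lemma gc_diff: "gcomp G (x - y) i = gcomp G x i - gcomp G y i"
  using gc_add[of x "-y"] gc_neg by simp
lemma gc_sumf: "finite S \<Longrightarrow> gcomp G (sum f S) i = (\<Sum>k\<in>S. gcomp G (f k) i)"
  by (induction S rule: finite_induct) (auto simp: gc_add)

lemma gc_ext: assumes "\<And>i. gcomp G x i = gcomp G y i" shows "x = y"
proof -
  have "gcomp G (x - y) i = 0" for i using assms gc_diff by simp
  then have "x - y = 0" using gc_sum[of "{}" "x - y"] by auto
  then show ?thesis by simp
qed


section \<open>Complexified level\<close>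

definition GC :: "int \<Rightarrow> ('g \<times> 'g) set" where "GC m = {z. fst z \<in> G m \<and> snd z \<in> G m}"

lemma gcC_add: "gcompC G (z + w) i = gcompC G z i + gcompC G w i"
  by (simp add: gcompC_def gc_add)
lemma gcC_diff: "gcompC G (z - w) i = gcompC G z i - gcompC G w i"
  by (simp add: gcompC_def gc_diff)
lemma gcC_neg: "gcompC G (- z) i = - gcompC G z i"
  by (simp add: gcompC_def gc_neg)
lemma gcC_zero[simp]: "gcompC G 0 i = 0"
  by (simp add: gcompC_def zero_prod_def)
lemma gcC_sumf: "finite S \<Longrightarrow> gcompC G (sum f S) i = (\<Sum>k\<in>S. gcompC G (f k) i)"
  by (induction S rule: finite_induct) (auto simp: gcC_add)
lemma gcC_cscale: "gcompC G (cscale c z) i = cscale c (gcompC G z i)"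
  by (simp add: gcompC_def cscale_def gc_add gc_diff gc_scale)
lemma gcC_scaleR: "gcompC G (r *\<^sub>R z) i = r *\<^sub>R gcompC G z i"
  by (simp add: gcompC_def gc_scale)

lemma gcC_in: "gcompC G z i \<in> GC i" by (simp add: gcompC_def GC_def gc_in)
lemma gcC_hom: "z \<in> GC m \<Longrightarrow> gcompC G z i = (if i = m then z else 0)"
  by (auto simp: gcompC_def GC_def gc_hom zero_prod_def)
lemma gcC_fin: "finite {i. gcompC G z i \<noteq> 0}"
proof -
  have "{i. gcompC G z i \<noteq> 0} \<subseteq> {i. gcomp G (fst z) i \<noteq> 0} \<union> {i. gcomp G (snd z) i \<noteq> 0}"
    by (auto simp: gcompC_def zero_prod_def)
  then show ?thesis using gc_fin finite_subset by blast
qed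

lemma gcC_sum: assumes "finite S" "{i. gcompC G z i \<noteq> 0} \<subseteq> S"
  shows "z = (\<Sum>i\<in>S. gcompC G z i)"
proof -
  have s1: "{i. gcomp G (fst z) i \<noteq> 0} \<subseteq> S" "{i. gcomp G (snd z) i \<noteq> 0} \<subseteq> S"
    using assms(2) by (auto simp: gcompC_def zero_prod_def)
  show ?thesis
    using gc_sum[OF assms(1) s1(1)] gc_sum[OF assms(1) s1(2)]
    by (simp add: gcompC_def prod_eq_iff fst_sum snd_sum)
qed

lemma gcC_sum': "z = (\<Sum>i\<in>{i. gcompC G z i \<noteq> 0}. gcompC G z i)"
  by (rule gcC_sum[OF gcC_fin]) auto

lemma gcC_ext: assumes "\<And>i. gcompC G z i = gcompC G w i" shows "z = w"
  using assms gc_ext by (simp add: gcompC_def prod_eq_iff)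

lemma GC_sub: "subspace (GC m)"
  using sub[of m] unfolding subspace_def GC_def by auto

lemma GC_cscale: "z \<in> GC m \<Longrightarrow> cscale c z \<in> GC m"
  unfolding GC_def cscale_def
  using subspace_add[OF sub] subspace_diff[OF sub] subspace_mul[OF sub] by auto

lemma cscale_add: "cscale c (z + w) = cscale c z + cscale c w"
  by (simp add: cscale_def algebra_simps)
lemma cscale_diff: "cscale c (z - w) = cscale c z - cscale c w"
  by (simp add: cscale_def algebra_simps)
lemma cscale_neg: "cscale c (- z) = - cscale c z"
  by (simp add: cscale_def algebra_simps)
lemma cscale_zero[simp]: "cscale c 0 = 0"
  by (simp add: cscale_def zero_prod_def)
lemma cscale_zero'[simp]: "cscale 0 z = 0"
  by (simp add: cscale_def zero_prod_def)
lemma cscale_one[simp]: "cscale 1 z = z"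
  by (simp add: cscale_def)
lemma cscale_mult: "cscale a (cscale b z) = cscale (a * b) z"
  by (simp add: cscale_def algebra_simps prod_eq_iff)
lemma cscale_sum: "cscale c (sum f S) = (\<Sum>k\<in>S. cscale c (f k))"
  by (induction S rule: infinite_finite_induct) (auto simp: cscale_add)
lemma cscale_scaleR: "cscale c (r *\<^sub>R z) = r *\<^sub>R cscale c z"
  by (simp add: cscale_def algebra_simps)
lemma cscale_eq0: "cscale c z = 0 \<Longrightarrow> c \<noteq> 0 \<Longrightarrow> z = 0"
  using cscale_mult[of "inverse c" c z] by simp
lemma cscale_inj: "cscale c z = cscale c w \<Longrightarrow> c \<noteq> 0 \<Longrightarrow> z = w"
  using cscale_eq0[of c "z - w"] by (simp add: cscale_diff)

lemma B_lin: "B x (a + b) = B x a + B x b" "B (a + b) y = B a y + B b y"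
  "B x (r *\<^sub>R a) = r *\<^sub>R B x a" "B (r *\<^sub>R a) y = r *\<^sub>R B a y"
  using lb unfolding lie_bracket_def linear_iff by auto

lemma B_more: "B x 0 = 0" "B 0 y = 0" "B x (- a) = - B x a" "B (- a) y = - B a y"
  "B x (a - b) = B x a - B x b" "B (a - b) y = B a y - B b y"
  using B_lin(3)[of x 0 0] B_lin(4)[of 0 0 y] B_lin(3)[of x "-1" a] B_lin(4)[of "-1" a y]
    B_lin(1)[of x a "-b"] B_lin(2)[of a "-b" y] B_lin(3)[of x "-1" b] B_lin(4)[of "-1" b y]
  by (auto simp: algebra_simps)

lemma cbr_add1: "cbr B (z + z') w = cbr B z w + cbr B z' w"
  by (simp add: cbr_def B_lin algebra_simps)
lemma cbr_add2: "cbr B z (w + w') = cbr B z w + cbr B z w'"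
  by (simp add: cbr_def B_lin algebra_simps)
lemma cbr_zero[simp]: "cbr B z 0 = 0" "cbr B 0 w = 0"
  by (simp_all add: cbr_def B_more zero_prod_def)
lemma cbr_neg: "cbr B (- z) w = - cbr B z w" "cbr B z (- w) = - cbr B z w"
  by (simp_all add: cbr_def B_more algebra_simps)
lemma cbr_diff: "cbr B z (w - w') = cbr B z w - cbr B z w'"
  "cbr B (z - z') w = cbr B z w - cbr B z' w"
  by (simp_all add: cbr_def B_more algebra_simps)
lemma cbr_cscale1: "cbr B (cscale c z) w = cscale c (cbr B z w)"
  by (simp add: cbr_def cscale_def B_lin B_more algebra_simps)
lemma cbr_cscale2: "cbr B z (cscale c w) = cscale c (cbr B z w)"
  by (simp add: cbr_def cscale_def B_lin B_more algebra_simps)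
lemma cbr_scaleR2: "cbr B z (r *\<^sub>R w) = r *\<^sub>R (cbr B z w)"
  by (simp add: cbr_def B_lin B_more algebra_simps)
lemma cbr_sum1: "cbr B (sum f S) w = (\<Sum>k\<in>S. cbr B (f k) w)"
  by (induction S rule: infinite_finite_induct) (auto simp: cbr_add1)
lemma cbr_sum2: "cbr B z (sum f S) = (\<Sum>k\<in>S. cbr B z (f k))"
  by (induction S rule: infinite_finite_induct) (auto simp: cbr_add2)

lemma cbr_GC: "z \<in> GC m \<Longrightarrow> w \<in> GC n \<Longrightarrow> cbr B z w \<in> GC (m + n)"
  unfolding GC_def cbr_def using degB subspace_add[OF sub] subspace_diff[OF sub] by auto

lemma cbr_decomp: "cbr B z w = (\<Sum>m\<in>{i. gcompC G z i \<noteq> 0}. \<Sum>n\<in>{i. gcompC G w i \<noteq> 0}.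
   cbr B (gcompC G z m) (gcompC G w n))"
proof -
  have "cbr B z w = cbr B (\<Sum>m\<in>{i. gcompC G z i \<noteq> 0}. gcompC G z m) (\<Sum>n\<in>{i. gcompC G w i \<noteq> 0}. gcompC G w n)"
    using gcC_sum'[of z] gcC_sum'[of w] by simp
  then show ?thesis by (simp add: cbr_sum1 cbr_sum2 sum.swap[where A="{i. gcompC G w i \<noteq> 0}"])
qed


section \<open>Dilation\<close>

definition Dl :: "complex \<Rightarrow> 'g \<times> 'g \<Rightarrow> 'g \<times> 'g" where
  "Dl t z = (\<Sum>i\<in>{i. gcompC G z i \<noteq> 0}. cscale (t powi (-i)) (gcompC G z i))"

lemma gc_Dl: "gcompC G (Dl t z) i = cscale (t powi (-i)) (gcompC G z i)"
proof -
  have "gcompC G (Dl t z) i = (\<Sum>m\<in>{i. gcompC G z i \<noteq> 0}. cscale (t powi (-m)) (if i = m then gcompC G z m else 0))"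
    unfolding Dl_def by (simp add: gcC_sumf[OF gcC_fin] gcC_cscale gcC_hom[OF gcC_in])
  also have "\<dots> = (\<Sum>m\<in>{i. gcompC G z i \<noteq> 0}. if i = m then cscale (t powi (-m)) (gcompC G z m) else 0)"
    by (rule sum.cong) auto
  also have "\<dots> = cscale (t powi (-i)) (gcompC G z i)"
    using gcC_fin[of z] by (auto simp: sum.delta)
  finally show ?thesis .
qed

lemma Dl_add: "Dl t (z + w) = Dl t z + Dl t w"
  by (rule gcC_ext) (simp add: gc_Dl gcC_add cscale_add)
lemma Dl_diff: "Dl t (z - w) = Dl t z - Dl t w"
  by (rule gcC_ext) (simp add: gc_Dl gcC_diff cscale_diff)
lemma Dl_neg: "Dl t (- z) = - Dl t z"
  by (rule gcC_ext) (simp add: gc_Dl gcC_neg cscale_neg)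
lemma Dl_zero[simp]: "Dl t 0 = 0"
  by (rule gcC_ext) (simp add: gc_Dl)
lemma Dl_cscale: "Dl t (cscale c z) = cscale c (Dl t z)"
  by (rule gcC_ext) (simp add: gc_Dl gcC_cscale cscale_mult mult.commute)
lemma Dl_scaleR: "Dl t (r *\<^sub>R z) = r *\<^sub>R Dl t z"
  by (rule gcC_ext) (simp add: gc_Dl gcC_scaleR cscale_scaleR)
lemma Dl_sum: "Dl t (sum f S) = (\<Sum>k\<in>S. Dl t (f k))"
  by (induction S rule: infinite_finite_induct) (auto simp: Dl_add)
lemma Dl_hom: "z \<in> GC m \<Longrightarrow> Dl t z = cscale (t powi (-m)) z"
  by (rule gcC_ext) (simp add: gc_Dl gcC_cscale gcC_hom)

lemma Dl_cbr: assumes "t \<noteq> 0" shows "Dl t (cbr B z w) = cbr B (Dl t z) (Dl t w)"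
proof -
  let ?Sz = "{i. gcompC G z i \<noteq> 0}" and ?Sw = "{i. gcompC G w i \<noteq> 0}"
  have "Dl t (cbr B z w) = (\<Sum>m\<in>?Sz. \<Sum>n\<in>?Sw. Dl t (cbr B (gcompC G z m) (gcompC G w n)))"
    by (subst cbr_decomp) (simp add: Dl_sum)
  also have "\<dots> = (\<Sum>m\<in>?Sz. \<Sum>n\<in>?Sw. cbr B (cscale (t powi (-m)) (gcompC G z m)) (cscale (t powi (-n)) (gcompC G w n)))"
  proof (intro sum.cong refl)
    fix m n
    have "Dl t (cbr B (gcompC G z m) (gcompC G w n)) = cscale (t powi (- (m + n))) (cbr B (gcompC G z m) (gcompC G w n))"
      by (rule Dl_hom[OF cbr_GC[OF gcC_in gcC_in]])
    also have "\<dots> = cbr B (cscale (t powi (-m)) (gcompC G z m)) (cscale (t powi (-n)) (gcompC G w n))"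
    proof -
      have e: "t powi (- (m + n)) = t powi (-m) * t powi (-n)" using power_int_add[of t "-m" "-n"] assms by simp
      show ?thesis by (simp only: e cbr_cscale1 cbr_cscale2 cscale_mult mult.commute)
    qed
    finally show "Dl t (cbr B (gcompC G z m) (gcompC G w n)) = \<dots>" .
  qed
  also have "\<dots> = cbr B (Dl t z) (Dl t w)"
    unfolding Dl_def by (simp add: cbr_sum1 cbr_sum2 sum.swap[where A="{i. gcompC G w i \<noteq> 0}"])
  finally show ?thesis .
qed

lemma Dl_inj: assumes "t \<noteq> 0" "Dl t z = Dl t w" shows "z = w"
proof (rule gcC_ext)
  fix i
  have "cscale (t powi (-i)) (gcompC G z i) = cscale (t powi (-i)) (gcompC G w i)"
    using assms(2) gc_Dl by metis
  then show "gcompC G z i = gcompC G w i" using cscale_inj assms(1) power_int_not_zero by metis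
qed

end

locale pc = gla G B for G :: "int \<Rightarrow> 'g::real_vector set" and B +
  fixes I :: "'g \<Rightarrow> 'g" and l :: int
  assumes low: "\<And>i. i < -l \<Longrightarrow> G i = {0}"
    and Iin: "\<And>x. x \<in> G (-1) \<Longrightarrow> I x \<in> G (-1)"
    and II: "\<And>x. x \<in> G (-1) \<Longrightarrow> I (I x) = - x"
    and Ilin: "\<And>x y a b. x \<in> G (-1) \<Longrightarrow> y \<in> G (-1) \<Longrightarrow> I (a *\<^sub>R x + b *\<^sub>R y) = a *\<^sub>R I x + b *\<^sub>R I y"
begin

lemma I_add: "x \<in> G (-1) \<Longrightarrow> y \<in> G (-1) \<Longrightarrow> I (x + y) = I x + I y"
  using Ilin[of x y 1 1] by simp
lemma I_scale: "x \<in> G (-1) \<Longrightarrow> I (a *\<^sub>R x) = a *\<^sub>R I x"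
  using Ilin[of x x a 0] by simp
lemma I_zero: "I 0 = 0"
  using I_scale[OF subspace_0[OF sub], of 0] by simp
lemma I_diff: "x \<in> G (-1) \<Longrightarrow> y \<in> G (-1) \<Longrightarrow> I (x - y) = I x - I y"
  using Ilin[of x y 1 "-1"] by simp

lemma g10_iff: "z \<in> g10 G I \<longleftrightarrow> fst z \<in> G (-1) \<and> snd z = - I (fst z)"
  unfolding g10_def by (cases z) auto
lemma g01_iff: "z \<in> g01 G I \<longleftrightarrow> fst z \<in> G (-1) \<and> snd z = I (fst z)"
  unfolding g01_def by (cases z) auto

lemma g10_GC: "z \<in> g10 G I \<Longrightarrow> z \<in> GC (-1)"
  by (auto simp: g10_iff GC_def Iin subspace_neg[OF sub])
lemma g01_GC: "z \<in> g01 G I \<Longrightarrow> z \<in> GC (-1)"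
  by (auto simp: g01_iff GC_def Iin)

lemmas S1 = subspace_add[OF sub] subspace_diff[OF sub] subspace_mul[OF sub] subspace_neg[OF sub] subspace_0[OF sub]

lemma g10_cscale: "z \<in> g10 G I \<Longrightarrow> cscale c z \<in> g10 G I"
  by (auto simp: g10_iff cscale_def S1 Iin I_add I_scale I_diff II algebra_simps)
lemma g01_cscale: "z \<in> g01 G I \<Longrightarrow> cscale c z \<in> g01 G I"
  by (auto simp: g01_iff cscale_def S1 Iin I_add I_scale I_diff II algebra_simps)
lemma g10_diff: "z \<in> g10 G I \<Longrightarrow> w \<in> g10 G I \<Longrightarrow> z - w \<in> g10 G I"
  by (auto simp: g10_iff S1 I_diff)
lemma g10_add: "z \<in> g10 G I \<Longrightarrow> w \<in> g10 G I \<Longrightarrow> z + w \<in> g10 G I"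
  by (auto simp: g10_iff S1 I_add)
lemma g01_diff: "z \<in> g01 G I \<Longrightarrow> w \<in> g01 G I \<Longrightarrow> z - w \<in> g01 G I"
  by (auto simp: g01_iff S1 I_diff)
lemma g10_zero: "0 \<in> g10 G I"
  by (auto simp: g10_iff S1 I_zero)

lemma g10_g01: assumes "z \<in> g10 G I" "z \<in> g01 G I" shows "z = 0"
proof -
  have x: "fst z \<in> G (-1)" and e: "- I (fst z) = I (fst z)" and s: "snd z = I (fst z)"
    using assms by (auto simp: g10_iff g01_iff)
  have "I (fst z) = 0" using e by (metis scaleR_half_double add.right_inverse scale_zero_right)
  then have "fst z = 0" using II[OF x] I_zero by (metis neg_0_equal_iff_equal)
  then show ?thesis using s I_zero by (simp add: prod_eq_iff)
qed

lemma nset_iff: "z \<in> nset G I \<longleftrightarrow> (\<forall>i\<ge>0. gcompC G z i = 0) \<and> gcompC G z (-1) \<in> g10 G I"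
  unfolding nset_def by simp

lemma nset_add: "z \<in> nset G I \<Longrightarrow> w \<in> nset G I \<Longrightarrow> z + w \<in> nset G I"
  by (simp add: nset_iff gcC_add g10_add)
lemma nset_diff: "z \<in> nset G I \<Longrightarrow> w \<in> nset G I \<Longrightarrow> z - w \<in> nset G I"
  by (simp add: nset_iff gcC_diff g10_diff)
lemma nset_cscale: "z \<in> nset G I \<Longrightarrow> cscale c z \<in> nset G I"
  by (simp add: nset_iff gcC_cscale g10_cscale)
lemma nset_Dl: "z \<in> nset G I \<Longrightarrow> Dl t z \<in> nset G I"
  by (simp add: nset_iff gc_Dl g10_cscale)
lemma g01_Dl: "z \<in> g01 G I \<Longrightarrow> Dl t z \<in> g01 G I"
  using Dl_hom[OF g01_GC] g01_cscale by simp

lemma gc_mC: "gcompC G (mCpart G z) i = (if i < 0 then gcompC G z i else 0)"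
proof -
  have f: "finite {i. i < 0 \<and> gcompC G z i \<noteq> 0}" using gcC_fin[of z] by (rule rev_finite_subset) auto
  have "gcompC G (mCpart G z) i = (\<Sum>m\<in>{i. i < 0 \<and> gcompC G z i \<noteq> 0}. if i = m then gcompC G z m else 0)"
    unfolding mCpart_def by (simp add: gcC_sumf[OF f] gcC_hom[OF gcC_in])
  also have "\<dots> = (if i < 0 then gcompC G z i else 0)"
    using f by (auto simp: sum.delta)
  finally show ?thesis .
qed

lemma mC_Dl: "mCpart G (Dl t z) = Dl t (mCpart G z)"
  by (rule gcC_ext) (simp add: gc_Dl gc_mC)
lemma mC_cscale: "mCpart G (cscale c z) = cscale c (mCpart G z)"
  by (rule gcC_ext) (simp add: gcC_cscale gc_mC)

lemma projn_ex1: "\<exists>!p. p \<in> nset G I \<and> mCpart G u - p \<in> g01 G I"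
proof -
  obtain a1 a2 where a: "gcompC G u (-1) = (a1, a2)" by fastforce
  have a12: "a1 \<in> G (-1)" "a2 \<in> G (-1)" using gcC_in[of u "-1"] a by (auto simp: GC_def)
  define y where "y = (1/2) *\<^sub>R (a1 - I a2)"
  have yG: "y \<in> G (-1)" unfolding y_def using a12 by (simp add: S1 Iin)
  have yg: "(y, I y) \<in> g01 G I" using yG by (simp add: g01_iff)
  define p where "p = mCpart G u - (y, I y)"
  have "p \<in> nset G I"
  proof -
    have "gcompC G p i = 0" if "i \<ge> 0" for i
      using that by (simp add: p_def gcC_diff gc_mC gcC_hom[OF g01_GC[OF yg]])
    moreover have "gcompC G p (-1) \<in> g10 G I"
    proof -
      have "gcompC G p (-1) = (a1 - y, a2 - I y)"
        by (simp add: p_def gcC_diff gc_mC gcC_hom[OF g01_GC[OF yg]] a)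
      moreover have "a2 - I y = - I (a1 - y)"
      proof -
        have Ia2: "I a2 \<in> G (-1)" using a12 Iin by simp
        have d: "a1 - I a2 \<in> G (-1)" using a12 Ia2 S1 by blast
        have Iy: "I y = (1/2) *\<^sub>R (I a1 + a2)"
          unfolding y_def using I_scale[OF d] I_diff[OF a12(1) Ia2] II[OF a12(2)] by simp
        have h: "I y + I y = I a1 + a2" using Iy by (metis scaleR_half_double scaleR_right_distrib)
        have h2: "a2 = I y + I y - I a1" using h by (simp add: algebra_simps)
        have "I (a1 - y) = I a1 - I y" using I_diff[OF a12(1) yG] .
        then show ?thesis by (subst h2) (simp add: algebra_simps)
      qed
      ultimately show ?thesis using a12 yG by (simp add: g10_iff S1)
    qed
    ultimately show ?thesis by (simp add: nset_iff)
  qed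
  moreover have "mCpart G u - p \<in> g01 G I" using yg by (simp add: p_def)
  moreover have "q = p" if "q \<in> nset G I" "mCpart G u - q \<in> g01 G I" for q
  proof -
    have d01: "p - q \<in> g01 G I"
      using g01_diff[OF that(2) \<open>mCpart G u - p \<in> g01 G I\<close>] by (simp add: algebra_simps)
    have d10: "gcompC G (p - q) (-1) \<in> g10 G I"
      using \<open>p \<in> nset G I\<close> that(1) by (simp add: nset_iff gcC_diff g10_diff)
    have "gcompC G (p - q) (-1) = p - q" using gcC_hom[OF g01_GC[OF d01]] by simp
    then have "p - q \<in> g10 G I" using d10 by simp
    then have "p - q = 0" using d01 g10_g01 by blast
    then show ?thesis by simp
  qed
  ultimately show ?thesis by blast
qed

lemma projn_prop: "projn G I u \<in> nset G I \<and> mCpart G u - projn G I u \<in> g01 G I"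
  unfolding projn_def by (rule theI'[OF projn_ex1])

lemma projn_L: assumes ladd: "\<And>a b. L (a - b) = L a - L b"
  and ln: "\<And>z. z \<in> nset G I \<Longrightarrow> L z \<in> nset G I"
  and l01: "\<And>z. z \<in> g01 G I \<Longrightarrow> L z \<in> g01 G I"
  and lm: "\<And>z. mCpart G (L z) = L (mCpart G z)"
  shows "projn G I (L u) = L (projn G I u)"
proof -
  have P: "L (projn G I u) \<in> nset G I \<and> mCpart G (L u) - L (projn G I u) \<in> g01 G I"
    using projn_prop[of u] ln l01 lm ladd by metis
  show ?thesis
    using the1_equality[OF projn_ex1 P] by (simp only: projn_def)
qed


section \<open>Adjoint series equivariance\<close>

lemma adpow_0[simp]: "adpow B Y 0 w = w" by (simp add: adpow_def)
lemma adpow_Suc: "adpow B Y (Suc k) w = cbr B Y (adpow B Y k w)" by (simp add: adpow_def)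

lemma nord_L: assumes "\<And>k. adpow B Y' k (L w) = L (adpow B Y k w)" "L 0 = 0" "\<And>a. L a = 0 \<Longrightarrow> a = 0"
  shows "nord B Y' (L w) = nord B Y w"
proof -
  have "\<And>k. (adpow B Y' k (L w) = 0) = (adpow B Y k w = 0)" using assms by metis
  then have "(\<lambda>k. adpow B Y' k (L w) = 0) = (\<lambda>k. adpow B Y k w = 0)" by simp
  then show ?thesis unfolding nord_def by simp
qed

lemma AdExp_L: assumes "\<And>k. adpow B Y' k (L w) = L (adpow B Y k w)" "L 0 = 0" "\<And>a. L a = 0 \<Longrightarrow> a = 0"
  and "\<And>(f::nat \<Rightarrow> _) S. L (sum f S) = (\<Sum>k\<in>S. L (f k))" "\<And>r a. L (r *\<^sub>R a) = r *\<^sub>R L a"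
  shows "AdExp B Y' (L w) = L (AdExp B Y w)" "dexpL B Y' (L w) = L (dexpL B Y w)"
proof -
  have n: "nord B Y' (L w) = nord B Y w" by (rule nord_L[OF assms(1-3)])
  show "AdExp B Y' (L w) = L (AdExp B Y w)" "dexpL B Y' (L w) = L (dexpL B Y w)"
    unfolding AdExp_def dexpL_def n by (simp_all add: assms(1,4,5))
qed

lemma adpow_Dl: "t \<noteq> 0 \<Longrightarrow> adpow B (Dl t Y) k (Dl t w) = Dl t (adpow B Y k w)"
  by (induction k) (simp_all add: adpow_Suc Dl_cbr)
lemma adpow_cscale: "adpow B Y k (cscale c w) = cscale c (adpow B Y k w)"
  by (induction k) (simp_all add: adpow_Suc cbr_cscale2)
lemma adpow_diff: "adpow B Y k (a - b) = adpow B Y k a - adpow B Y k b"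
  by (induction k) (simp_all add: adpow_Suc cbr_diff)
lemma adpow_zero[simp]: "adpow B Y k 0 = 0"
  by (induction k) (simp_all add: adpow_Suc)

lemma Dl_eq0: "t \<noteq> 0 \<Longrightarrow> Dl t a = 0 \<Longrightarrow> a = 0"
  using Dl_inj[of t a 0] by simp

lemma AdExp_Dl: assumes "t \<noteq> 0"
  shows "AdExp B (Dl t Y) (Dl t w) = Dl t (AdExp B Y w)" "dexpL B (Dl t Y) (Dl t w) = Dl t (dexpL B Y w)"
proof -
  have a1: "\<And>k. adpow B (Dl t Y) k (Dl t w) = Dl t (adpow B Y k w)" using adpow_Dl assms by blast
  note r = AdExp_L[OF a1 Dl_zero Dl_eq0[OF assms] Dl_sum Dl_scaleR]
  show "AdExp B (Dl t Y) (Dl t w) = Dl t (AdExp B Y w)" by (rule r(1))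
  show "dexpL B (Dl t Y) (Dl t w) = Dl t (dexpL B Y w)" by (rule r(2))
qed

lemma AdExp_cscale: assumes "c \<noteq> 0"
  shows "AdExp B Y (cscale c w) = cscale c (AdExp B Y w)" "dexpL B Y (cscale c w) = cscale c (dexpL B Y w)"
proof -
  note r = AdExp_L[OF adpow_cscale cscale_zero cscale_eq0[OF _ assms] cscale_sum cscale_scaleR]
  show "AdExp B Y (cscale c w) = cscale c (AdExp B Y w)" by (rule r(1))
  show "dexpL B Y (cscale c w) = cscale c (dexpL B Y w)" by (rule r(2))
qed


section \<open>Degree bounds\<close>

definition dle :: "int \<Rightarrow> 'g \<times> 'g \<Rightarrow> bool" where "dle h z \<longleftrightarrow> (\<forall>i>h. gcompC G z i = 0)"

lemma dle_mono: "dle h z \<Longrightarrow> h \<le> h' \<Longrightarrow> dle h' z" by (auto simp: dle_def)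
lemma dle_diff: "dle h z \<Longrightarrow> dle h w \<Longrightarrow> dle h (z - w)" by (auto simp: dle_def gcC_diff)
lemma dle_add: "dle h z \<Longrightarrow> dle h w \<Longrightarrow> dle h (z + w)" by (auto simp: dle_def gcC_add)
lemma dle_neg: "dle h z \<Longrightarrow> dle h (- z)" by (auto simp: dle_def gcC_neg)
lemma dle_scaleR: "dle h z \<Longrightarrow> dle h (r *\<^sub>R z)" by (auto simp: dle_def gcC_scaleR)
lemma dle_zero: "dle h 0" by (auto simp: dle_def)
lemma dle_sum: "(\<And>k. k \<in> S \<Longrightarrow> dle h (f k)) \<Longrightarrow> dle h (sum f S)"
  by (induction S rule: infinite_finite_induct) (auto simp: dle_zero dle_add)

lemma dle_cbr: assumes "dle a z" "dle b w" shows "dle (a + b) (cbr B z w)"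
  unfolding dle_def
proof (intro allI impI)
  fix i assume i: "i > a + b"
  have "gcompC G (cbr B z w) i = (\<Sum>m\<in>{i. gcompC G z i \<noteq> 0}. \<Sum>n\<in>{i. gcompC G w i \<noteq> 0}.
     gcompC G (cbr B (gcompC G z m) (gcompC G w n)) i)"
    by (subst cbr_decomp) (simp add: gcC_sumf[OF gcC_fin])
  also have "\<dots> = 0"
  proof (intro sum.neutral ballI)
    fix m n assume m: "m \<in> {i. gcompC G z i \<noteq> 0}" and n: "n \<in> {i. gcompC G w i \<noteq> 0}"
    have "m \<le> a" "n \<le> b" using m n assms unfolding dle_def by (auto simp: not_less[symmetric])
    then show "gcompC G (cbr B (gcompC G z m) (gcompC G w n)) i = 0"
      using i by (simp add: gcC_hom[OF cbr_GC[OF gcC_in gcC_in]])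
  qed
  finally show "gcompC G (cbr B z w) i = 0" .
qed

lemma dle_low: assumes "dle h z" "h < -l" shows "z = 0"
proof (rule gcC_ext)
  fix i
  show "gcompC G z i = gcompC G 0 i"
  proof (cases "i > h")
    case True then show ?thesis using assms by (simp add: dle_def)
  next
    case False
    then have "G i = {0}" using assms low by simp
    then show ?thesis using gcC_in[of z i] by (simp add: GC_def prod_eq_iff gcompC_def)
  qed
qed

lemma nset_dle: "z \<in> nset G I \<Longrightarrow> dle (-1) z" by (auto simp: dle_def nset_iff)
lemma dle_nset: "dle (-2) z \<Longrightarrow> z \<in> nset G I" by (auto simp: dle_def nset_iff g10_zero)

lemma dle_ex: "\<exists>h. dle h z"
proof -
  have "dle (Max (insert 0 {i. gcompC G z i \<noteq> 0})) z"
    unfolding dle_def using gcC_fin[of z]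
    by (auto simp: not_less[symmetric])
  then show ?thesis ..
qed

lemma adpow_dle: "Y \<in> nset G I \<Longrightarrow> dle h w \<Longrightarrow> dle (h - int k) (adpow B Y k w)"
proof (induction k)
  case 0 then show ?case by simp
next
  case (Suc k)
  have "dle (-1 + (h - int k)) (cbr B Y (adpow B Y k w))"
    by (rule dle_cbr[OF nset_dle[OF Suc.prems(1)] Suc.IH[OF Suc.prems]])
  then show ?case by (simp add: adpow_Suc algebra_simps)
qed

lemma adpow_van: "Y \<in> nset G I \<Longrightarrow> dle h w \<Longrightarrow> int k > h + l \<Longrightarrow> adpow B Y k w = 0"
  using dle_low[OF adpow_dle] by fastforce

lemma adpow_after: "adpow B Y k w = 0 \<Longrightarrow> k \<le> k' \<Longrightarrow> adpow B Y k' w = 0"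
proof (induction k' arbitrary: k)
  case 0 then show ?case by simp
next
  case (Suc k')
  then show ?case by (cases "k = Suc k'") (auto simp: adpow_Suc)
qed

lemma series_N: assumes Y: "Y \<in> nset G I" and h: "dle h w" and N: "int N > h + l"
  shows "(\<Sum>k<nord B Y w. c k *\<^sub>R adpow B Y k w) = (\<Sum>k<N. c k *\<^sub>R adpow B Y k w)"
proof -
  have ex: "adpow B Y N w = 0" using adpow_van[OF Y h N] .
  have le: "nord B Y w \<le> N" unfolding nord_def by (rule Least_le) (rule ex)
  have z: "adpow B Y (nord B Y w) w = 0" unfolding nord_def by (rule LeastI[of _ N]) (rule ex)
  show ?thesis
    by (rule sum.mono_neutral_left) (use le adpow_after[OF z] in auto)
qed

lemma dexpL_N: assumes "Y \<in> nset G I" "dle h w" "int N > h + l"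
  shows "dexpL B Y w = (\<Sum>k<N. ((-1) ^ k / fact (Suc k)) *\<^sub>R adpow B Y k w)"
  unfolding dexpL_def by (rule series_N[OF assms])

lemma dexpL_diff: assumes Y: "Y \<in> nset G I" shows "dexpL B Y (a - b) = dexpL B Y a - dexpL B Y b"
proof -
  obtain ha hb where "dle ha a" "dle hb b" using dle_ex by blast
  then have a: "dle (max ha hb) a" and b: "dle (max ha hb) b" by (auto intro: dle_mono)
  define N where "N = nat (max ha hb + l) + 1"
  have N: "int N > max ha hb + l" unfolding N_def by linarith
  show ?thesis
    unfolding dexpL_N[OF Y a N] dexpL_N[OF Y b N] dexpL_N[OF Y dle_diff[OF a b] N]
    by (simp add: adpow_diff scaleR_diff_right sum_subtractf)
qed

definition Tm :: "'g \<times> 'g \<Rightarrow> 'g \<times> 'g \<Rightarrow> 'g \<times> 'g" where "Tm Y w = dexpL B Y w - w"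

lemma Tm_diff: "Y \<in> nset G I \<Longrightarrow> Tm Y (a - b) = Tm Y a - Tm Y b"
  by (simp add: Tm_def dexpL_diff)
lemma Tm_neg: "Y \<in> nset G I \<Longrightarrow> Tm Y (- a) = - Tm Y a"
  using Tm_diff[of Y 0 a] Tm_diff[of Y 0 0] by simp

lemma Tm_dle: assumes Y: "Y \<in> nset G I" and h: "dle h w" shows "dle (h - 1) (Tm Y w)"
proof -
  define N where "N = nat (h + l)"
  have N: "int (Suc N) > h + l" unfolding N_def by linarith
  have "Tm Y w = (\<Sum>k<N. ((-1) ^ Suc k / fact (Suc (Suc k))) *\<^sub>R adpow B Y (Suc k) w)"
    unfolding Tm_def dexpL_N[OF Y h N] sum.lessThan_Suc_shift by simp
  also have "dle (h - 1) \<dots>"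
  proof (rule dle_sum, rule dle_scaleR)
    fix k show "dle (h - 1) (adpow B Y (Suc k) w)"
      using adpow_dle[OF Y h, of "Suc k"] by (rule dle_mono) simp
  qed
  finally show ?thesis .
qed

lemma dexpL_inj0: assumes Y: "Y \<in> nset G I" and w: "w \<in> nset G I" and e: "dexpL B Y w = 0"
  shows "w = 0"
proof -
  have ww: "w = - Tm Y w" using e by (simp add: Tm_def)
  have "dle (-1 - int n) w" for n
  proof (induction n)
    case 0 then show ?case using nset_dle[OF w] by simp
  next
    case (Suc n)
    have "dle (-1 - int n - 1) (- Tm Y w)" by (rule dle_neg[OF Tm_dle[OF Y Suc.IH]])
    then show ?case using ww by (simp add: algebra_simps)
  qed
  from this[of "nat l"] show ?thesis by (rule dle_low) simp
qed

lemma dexpL_ex1: assumes Y: "Y \<in> nset G I" and v: "v \<in> nset G I"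
  shows "\<exists>!w. w \<in> nset G I \<and> dexpL B Y w = v"
proof -
  define ws where "ws = rec_nat v (\<lambda>_ w. v - Tm Y w)"
  have ws0: "ws 0 = v" and wsS: "\<And>n. ws (Suc n) = v - Tm Y (ws n)" by (simp_all add: ws_def)
  have wn: "ws n \<in> nset G I" for n
  proof (induction n)
    case 0 then show ?case using v ws0 by simp
  next
    case (Suc n)
    have "Tm Y (ws n) \<in> nset G I"
      using dle_nset Tm_dle[OF Y nset_dle[OF Suc.IH]] by simp
    then show ?case using wsS nset_diff[OF v] by simp
  qed
  have en: "dle (-2 - int n) (dexpL B Y (ws n) - v)" for n
  proof (induction n)
    case 0
    have "dexpL B Y (ws 0) - v = Tm Y v" by (simp add: ws0 Tm_def)
    then show ?case using Tm_dle[OF Y nset_dle[OF v]] by simp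
  next
    case (Suc n)
    have "dexpL B Y (ws (Suc n)) - v = Tm Y (ws (Suc n)) - Tm Y (ws n)"
      by (simp add: Tm_def wsS algebra_simps)
    also have "\<dots> = Tm Y (ws (Suc n) - ws n)" by (simp add: Tm_diff[OF Y])
    also have "ws (Suc n) - ws n = - (dexpL B Y (ws n) - v)" by (simp add: wsS Tm_def algebra_simps)
    finally have "dexpL B Y (ws (Suc n)) - v = - Tm Y (dexpL B Y (ws n) - v)" by (metis Tm_neg[OF Y] minus_diff_eq)
    moreover have "dle (-2 - int n - 1) (- Tm Y (dexpL B Y (ws n) - v))"
      by (rule dle_neg[OF Tm_dle[OF Y Suc.IH]])
    ultimately have "dle (-2 - int n - 1) (dexpL B Y (ws (Suc n)) - v)" by simp
    then show ?case by (simp add: algebra_simps)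
  qed
  have "dexpL B Y (ws (nat l)) - v = 0" using en[of "nat l"] by (rule dle_low) simp
  then have ex: "ws (nat l) \<in> nset G I \<and> dexpL B Y (ws (nat l)) = v" using wn by simp
  show ?thesis
  proof (rule ex1I[where a="ws (nat l)" and P="\<lambda>w. w \<in> nset G I \<and> dexpL B Y w = v", OF ex])
    fix w assume w: "w \<in> nset G I \<and> dexpL B Y w = v"
    have "dexpL B Y (w - ws (nat l)) = 0" using w ex by (simp add: dexpL_diff[OF Y])
    then have "w - ws (nat l) = 0" using dexpL_inj0[OF Y nset_diff] w ex by blast
    then show "w = ws (nat l)" by simp
  qed
qed

lemma expcoord_prop: "Y \<in> nset G I \<Longrightarrow> v \<in> nset G I \<Longrightarrow>
   expcoord G I B Y v \<in> nset G I \<and> dexpL B Y (expcoord G I B Y v) = v"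
  unfolding expcoord_def by (rule theI'[OF dexpL_ex1])

lemma expcoord_L: assumes Y: "Y \<in> nset G I" and v: "v \<in> nset G I" and Y': "Y' \<in> nset G I"
  and ln: "\<And>z. z \<in> nset G I \<Longrightarrow> L z \<in> nset G I"
  and ld: "\<And>w. dexpL B Y' (L w) = L (dexpL B Y w)"
  shows "expcoord G I B Y' (L v) = L (expcoord G I B Y v)"
proof -
  have P: "L (expcoord G I B Y v) \<in> nset G I \<and> dexpL B Y' (L (expcoord G I B Y v)) = L v"
    using expcoord_prop[OF Y v] ln ld by metis
  show ?thesis
    using the1_equality[OF dexpL_ex1[OF Y' ln[OF v]] P] by (simp only: expcoord_def)
qed


lemma dil_Dl: assumes z: "z \<in> nset G I" shows "dil G l t z = Dl t z"
proof (rule gcC_ext)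
  fix i
  have "gcompC G (dil G l t z) i = (\<Sum>k\<in>{1..l}. cscale (t ^ nat k) (if i = -k then gcompC G z (-k) else 0))"
    unfolding dil_def by (simp add: gcC_sumf gcC_cscale gcC_hom[OF gcC_in])
  also have "\<dots> = (\<Sum>k\<in>{1..l}. if k = -i then cscale (t ^ nat k) (gcompC G z (-k)) else 0)"
    by (rule sum.cong) auto
  also have "\<dots> = (if -i \<in> {1..l} then cscale (t ^ nat (-i)) (gcompC G z i) else 0)"
    by (simp add: sum.delta')
  also have "\<dots> = cscale (t powi (-i)) (gcompC G z i)"
  proof (cases "-i \<in> {1..l}")
    case True
    then have "t powi (-i) = t ^ nat (-i)" by (simp add: power_int_def)
    then show ?thesis using True by simp
  next
    case False
    then have "i \<ge> 0 \<or> i < -l" by auto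
    then have "gcompC G z i = 0"
    proof
      assume "i \<ge> 0" then show ?thesis using z by (simp add: nset_iff)
    next
      assume "i < -l" then have "G i = {0}" using low by simp
      then show ?thesis using gcC_in[of z i] by (simp add: GC_def prod_eq_iff gcompC_def)
    qed
    then show ?thesis using False by simp
  qed
  finally show "gcompC G (dil G l t z) i = gcompC G (Dl t z) i" by (simp add: gc_Dl)
qed

lemma main: assumes X: "X \<in> G j" and z: "z \<in> nset G I" and t: "t \<noteq> 0"
  shows "gcompC G (inf_cr_aut G I B X (dil G l t z)) (-k)
       = cscale (t powi (j + k)) (gcompC G (inf_cr_aut G I B X z) (-k))"
proof -
  define c where "c = t powi j"
  have c: "c \<noteq> 0" using t by (simp add: c_def power_int_not_zero)
  have X0: "(X, 0) \<in> GC j" using X S1 by (simp add: GC_def)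
  have Xe: "Dl t (cscale c (X, 0)) = (X, 0)"
    using t by (simp add: Dl_cscale Dl_hom[OF X0] cscale_mult c_def power_int_minus)
  define a0 where "a0 = AdExp B (- z) (X, 0)"
  define v where "v = projn G I a0"
  have v: "v \<in> nset G I" using projn_prop v_def by blast
  have nz: "- z \<in> nset G I" using nset_diff[OF _ z, of 0] by (simp add: nset_iff g10_zero)
  have Dz: "Dl t z \<in> nset G I" using nset_Dl[OF z] .
  have "AdExp B (- Dl t z) (X, 0) = AdExp B (Dl t (- z)) (Dl t (cscale c (X, 0)))"
    by (simp add: Xe Dl_neg)
  also have "\<dots> = Dl t (cscale c a0)"
    by (simp add: AdExp_Dl[OF t] AdExp_cscale[OF c] a0_def)
  finally have A: "AdExp B (- Dl t z) (X, 0) = Dl t (cscale c a0)" .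
  have P: "projn G I (Dl t (cscale c a0)) = Dl t (cscale c v)"
    unfolding v_def
    by (subst projn_L[where L="Dl t"], simp_all add: Dl_diff nset_Dl g01_Dl mC_Dl)
       (subst projn_L[where L="cscale c"], simp_all add: cscale_diff nset_cscale g01_cscale mC_cscale)
  have E: "expcoord G I B (Dl t z) (Dl t (cscale c v)) = Dl t (cscale c (expcoord G I B z v))"
  proof -
    have "expcoord G I B (Dl t z) (Dl t (cscale c v)) = Dl t (expcoord G I B z (cscale c v))"
      by (rule expcoord_L[where L="Dl t", OF z nset_cscale[OF v] Dz nset_Dl AdExp_Dl(2)[OF t]])
    also have "expcoord G I B z (cscale c v) = cscale c (expcoord G I B z v)"
      by (rule expcoord_L[where L="cscale c", OF z v z nset_cscale AdExp_cscale(2)[OF c]])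
    finally show ?thesis .
  qed
  have F: "inf_cr_aut G I B X (dil G l t z) = Dl t (cscale c (inf_cr_aut G I B X z))"
    by (simp only: inf_cr_aut_def dil_Dl[OF z] A P E a0_def[symmetric] v_def[symmetric])
  show ?thesis
    unfolding F gc_Dl gcC_cscale cscale_mult c_def
    using t by (simp add: power_int_add mult.commute)
qed

end

theorem mainTheorem6:
  fixes G :: "int \<Rightarrow> 'g::real_vector set" and B :: "'g \<Rightarrow> 'g \<Rightarrow> 'g"
    and I :: "'g \<Rightarrow> 'g" and l :: int and j :: int and X :: 'g
  assumes "graded_lie_algebra G B"
    and "pc_fundamental G B I l"
    and "tanaka_prolongation G B I"
    and "X \<in> G j"
  shows "weighted_homog_field G I l (inf_cr_aut G I B X) j"
proof -
  interpret pc G B I l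
  proof
    show "graded G" "lie_bracket B" using assms(1) by (auto simp: graded_lie_algebra_def)
    show "\<And>i j x y. x \<in> G i \<Longrightarrow> y \<in> G j \<Longrightarrow> B x y \<in> G (i + j)"
      using assms(1) by (auto simp: graded_lie_algebra_def)
    show "\<And>i. i < -l \<Longrightarrow> G i = {0}" using assms(2) by (auto simp: pc_fundamental_def)
    show "\<And>x. x \<in> G (-1) \<Longrightarrow> I x \<in> G (-1)" "\<And>x. x \<in> G (-1) \<Longrightarrow> I (I x) = - x"
      using assms(2) by (auto simp: pc_fundamental_def)
    show "\<And>x y a b. x \<in> G (-1) \<Longrightarrow> y \<in> G (-1) \<Longrightarrow> I (a *\<^sub>R x + b *\<^sub>R y) = a *\<^sub>R I x + b *\<^sub>R I y"
      using assms(2) unfolding pc_fundamental_def by blast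
  qed
  show ?thesis unfolding weighted_homog_field_def using main[OF assms(4)] by blast
qed

end
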